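(* Let $d>1$ be a divisor of $n$ and let $A$ be the Dickson matrix of a $q$-polynomial $f\in\mathbb{F}_{q^n}[x]$ which is Loewy-reducible with respect to the partition $\{d\mathbb{Z}_n,\mathbb{Z}_n\setminus d\mathbb{Z}_n\}$, where $d\mathbb{Z}_n=\{0,d,\dots,n-d\}$. Then $f(x)=f'(x)+\lambda\sum_{i=1}^{d-1}b_i\,Tr_{q^n|q^d}(ax)^{q^i}$ for some $\lambda,a\in\mathbb{F}_{q^n}^*$, some $b_1,\dots,b_{d-1}\in\mathbb{F}_{q^d}$ not all zero, and some $\mathbb{F}_{q^d}$-linear map $f'$ of $\mathbb{F}_{q^n}$.
   Context: The Dickson matrix of $f(x)=\sum_{j=0}^{n-1}a_jx^{q^j}$ is the $n\times n$ matrix indexed by $\mathbb{Z}_n$ with $A[i|j]=a_{j-i}^{q^i}$. $A$ is Loewy-reducible with respect to a partition $\{\alpha,\beta\}$ of $\mathbb{Z}_n$ if $|\alpha|,|\beta|\ge2$ and $\mathrm{rank}\,A[\alpha|\beta]=\mathrm{rank}\,A[\beta|\alpha]=1$ ($A[\alpha|\beta]$: rows $\alpha$, columns $\beta$). $Tr_{q^n|q^d}(x)=x+x^{q^d}+\dots+x^{q^{n-d}}$. *)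

theory Defs
  imports "HOL-Computational_Algebra.Primes" "Jordan_Normal_Form.DL_Rank_Submatrix"
begin

(* Indices of Z_n are represented by {0..<n}. A q-polynomial
   f(x) = sum_{j<n} c_j x^(q^j) is given by its coefficient function c. *)

definition qpoly :: "nat \<Rightarrow> nat \<Rightarrow> (nat \<Rightarrow> 'a::field) \<Rightarrow> 'a \<Rightarrow> 'a" where
  "qpoly q n c x = (\<Sum>j<n. c j * x ^ (q ^ j))"

definition dickson_matrix :: "nat \<Rightarrow> nat \<Rightarrow> (nat \<Rightarrow> 'a::field) \<Rightarrow> 'a mat" where
  "dickson_matrix q n c = mat n n (\<lambda>(i, j). (c (nat ((int j - int i) mod int n))) ^ (q ^ i))"

definition mat_rank :: "'a::field mat \<Rightarrow> nat" where
  "mat_rank M = vec_space.rank (dim_row M) M"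

definition loewy_reducible :: "nat \<Rightarrow> 'a::field mat \<Rightarrow> nat set \<Rightarrow> nat set \<Rightarrow> bool" where
  "loewy_reducible n A \<alpha> \<beta> \<longleftrightarrow>
     \<alpha> \<union> \<beta> = {0..<n} \<and> \<alpha> \<inter> \<beta> = {} \<and> card \<alpha> \<ge> 2 \<and> card \<beta> \<ge> 2 \<and>
     mat_rank (submatrix A \<alpha> \<beta>) = 1 \<and> mat_rank (submatrix A \<beta> \<alpha>) = 1"

definition trace_rel :: "nat \<Rightarrow> nat \<Rightarrow> nat \<Rightarrow> 'a::field \<Rightarrow> 'a" where
  "trace_rel q n d x = (\<Sum>k<n div d. x ^ (q ^ (d * k)))"

definition subfield_q :: "nat \<Rightarrow> nat \<Rightarrow> 'a::field set" where
  "subfield_q q d = {x. x ^ (q ^ d) = x}"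

definition subfield_linear :: "nat \<Rightarrow> nat \<Rightarrow> ('a::field \<Rightarrow> 'a) \<Rightarrow> bool" where
  "subfield_linear q d g \<longleftrightarrow> (\<forall>x y. g (x + y) = g x + g y) \<and>
     (\<forall>c \<in> subfield_q q d. \<forall>x. g (c * x) = c * g x)"

end

theory Submission imports Defs begin

lemma roots_bound: assumes "m > 0" shows "card {x::'a::field. x ^ m = 1} \<le> m"
proof -
  let ?p = "monom (1::'a) m - 1"
  have "?p = monom 1 m + (- 1)" by simp
  also have "degree \<dots> = m" using assms by (subst degree_add_eq_left) (auto simp: degree_monom_eq)
  finally have deg: "degree ?p = m" .
  have "?p \<noteq> 0" using deg assms by auto
  then have "card {x. poly ?p x = 0} \<le> degree ?p" by (rule card_poly_roots_bound)
  moreover have "{x. poly ?p x = 0} = {x. x ^ m = 1}" by (auto simp: poly_monom)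
  ultimately show ?thesis using deg by simp
qed

lemma ff_card_zero: "of_nat (card (UNIV :: 'a::{finite,field} set)) = (0::'a)"
proof -
  have "(\<Sum>y\<in>(UNIV::'a set). 1 + y) = (\<Sum>y\<in>UNIV. y)"
    by (rule sum.reindex_bij_witness[of _ "\<lambda>y. y - 1" "\<lambda>y. 1 + y"]) auto
  then show ?thesis by (simp add: sum.distrib)
qed

lemma ff_pow_card: "(x::'a::{finite,field}) ^ card (UNIV :: 'a set) = x"
proof (cases "x = 0")
  case False
  have "x * (\<Prod>y\<in>UNIV-{0}. x * y) = x * x ^ (card (UNIV :: 'a set) - 1) * \<Prod>(UNIV-{0})"
    by (simp add: prod.distrib mult_ac)
  also have "x * x ^ (card (UNIV :: 'a set) - 1) = x ^ Suc (card (UNIV :: 'a set) - 1)"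
    by (subst power_Suc) auto
  also have "Suc (card (UNIV :: 'a set) - 1) = card (UNIV :: 'a set)"
    using finite_UNIV_card_ge_0[where ?'a = 'a] by simp
  also have "(\<Prod>y\<in>UNIV-{0}. x * y) = (\<Prod>y\<in>UNIV-{0}. y)"
    by (rule prod.reindex_bij_witness[of _ "\<lambda>y. y / x" "\<lambda>y. x * y"]) (use False in auto)
  finally show ?thesis
    by simp
qed (use finite_UNIV_card_ge_0[where ?'a = 'a] in auto)

lemma ff_char:
  assumes "prime p" "card (UNIV :: 'a::{finite,field} set) = p ^ e" "e > 0"
  shows "CHAR('a) = p"
proof -
  have pos: "CHAR('a) > 0" by (rule finite_imp_CHAR_pos) simp
  then have pr: "prime CHAR('a)" by (rule prime_CHAR_semidom)
  have "CHAR('a) dvd p ^ e" using ff_card_zero[where 'a='a] assms(2) of_nat_eq_0_iff_char_dvd by metis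
  then have "CHAR('a) dvd p" using pr prime_dvd_power by blast
  then show ?thesis using pr assms(1) primes_dvd_imp_eq by blast
qed


lemma geom_nat: "(\<Sum>l<N. Q^l) * (Q - 1) = Q^N - (1::nat)" if "Q \<ge> 1"
proof (induction N)
  case (Suc N)
  have "(\<Sum>l<Suc N. Q^l) * (Q - 1) = (\<Sum>l<N. Q^l) * (Q - 1) + Q^N * (Q - 1)" by (simp add: algebra_simps)
  also have "\<dots> = Q^N - 1 + (Q^N * Q - Q^N)" using Suc by (simp add: diff_mult_distrib2)
  also have "\<dots> = Q^Suc N - 1"
  proof -
    have a: "Q^N \<ge> 1" using that by simp
    have b: "Q^N * Q \<ge> Q^N" using that by simp
    show ?thesis using a b by (simp add: mult.commute)
  qed
  finally show ?case .
qed simp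

lemma hilbert90:
  fixes \<nu> :: "'a::{finite,field}"
  assumes card: "card (UNIV :: 'a set) = q ^ n" and q2: "q \<ge> 2" and nd: "n = d * N" and "d > 0" "N > 0"
    and norm: "\<nu> ^ (\<Sum>l<N. (q^d)^l) = 1"
  shows "\<exists>a. a \<noteq> 0 \<and> \<nu> * a = a ^ (q ^ d)"
proof -
  define K where "K = q^d - 1"
  define M where "M = (\<Sum>l<N. (q^d)^l)"
  have qd: "q^d \<ge> 2" using q2 \<open>d > 0\<close> by (intro order.trans[OF q2 self_le_power]) auto
  have K1: "K \<ge> 1" using qd K_def by simp
  have M1: "M \<ge> 1" unfolding M_def using \<open>N > 0\<close> by (simp add: lessThan_Suc_eq_insert_0 Suc_le_eq sum_pos2[of "{..<N}" 0])
  have MK: "M * K = q^n - 1" unfolding M_def K_def using geom_nat[of "q^d" N] qd nd by (simp add: power_mult)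
  define U where "U = (UNIV :: 'a set) - {0}"
  have cardU: "card U = q^n - 1" unfolding U_def using card by (simp add: card_Diff_singleton)
  define phi where "phi = (\<lambda>a::'a. a ^ K)"
  define S where "S = {y::'a. y ^ M = 1}"
  have pw: "a ^ (q^n - 1) = 1" if "a \<noteq> 0" for a :: 'a
  proof -
    have "a * a ^ (q^n - 1) = a ^ (q^n)"
    proof -
      have "q^n \<ge> 1" using q2 by simp
      then have "q^n = Suc (q^n - 1)" by simp
      then show ?thesis by (metis power_Suc)
    qed
    also have "\<dots> = a" using ff_pow_card[of a] card by simp
    finally show ?thesis using that by (metis mult_cancel_left1)
  qed
  have imgS: "phi ` U \<subseteq> S"
  proof
    fix y assume "y \<in> phi ` U"
    then obtain a where a: "a \<in> U" "y = a ^ K" unfolding phi_def by auto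
    have "y ^ M = a ^ (q^n - 1)" using a MK by (simp add: power_mult[symmetric] mult.commute)
    then show "y \<in> S" using pw a unfolding U_def S_def by auto
  qed
  have fib: "card {a\<in>U. phi a = y} \<le> K" for y
  proof (cases "{a\<in>U. phi a = y} = {}")
    case False
    then obtain a0 where a0: "a0 \<in> U" "phi a0 = y" by auto
    have "{a\<in>U. phi a = y} \<subseteq> (\<lambda>t. a0 * t) ` {t. t ^ K = 1}"
    proof
      fix a assume a: "a \<in> {a\<in>U. phi a = y}"
      have "a0 \<noteq> 0" using a0 U_def by auto
      moreover have "y \<noteq> 0" using a0 U_def phi_def by auto
      ultimately have "(a / a0) ^ K = 1" using a a0 unfolding phi_def by (simp add: power_divide)
      moreover have "a = a0 * (a / a0)" using \<open>a0 \<noteq> 0\<close> by simp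
      ultimately show "a \<in> (\<lambda>t. a0 * t) ` {t. t ^ K = 1}" by blast
    qed
    then have "card {a\<in>U. phi a = y} \<le> card ((\<lambda>t. a0 * t) ` {t. t ^ K = 1})" by (intro card_mono) auto
    also have "\<dots> \<le> card {t::'a. t ^ K = 1}" by (rule card_image_le) auto
    also have "\<dots> \<le> K" using roots_bound[where 'a='a, of K] K1 by simp
    finally show ?thesis .
  next
    case True then show ?thesis by (metis card.empty le0)
  qed
  have Ueq: "U = (\<Union>y\<in>phi ` U. {a\<in>U. phi a = y})" by auto
  have "card (\<Union>y\<in>phi ` U. {a\<in>U. phi a = y}) \<le> (\<Sum>y\<in>phi ` U. card {a\<in>U. phi a = y})"
    by (rule card_UN_le) simp
  then have "card U \<le> (\<Sum>y\<in>phi ` U. card {a\<in>U. phi a = y})" using Ueq by simp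
  also have "\<dots> \<le> card (phi ` U) * K"
    using sum_bounded_above[of "phi ` U" "\<lambda>y. card {a\<in>U. phi a = y}" K] fib by simp
  finally have "M * K \<le> card (phi ` U) * K" using cardU MK by simp
  then have "M \<le> card (phi ` U)" using K1 by simp
  moreover have "card S \<le> M" unfolding S_def using roots_bound[where 'a='a, of M] M1 by simp
  ultimately have "phi ` U = S" using imgS by (intro card_seteq) auto
  moreover have "\<nu> \<in> S" using norm unfolding S_def M_def by simp
  ultimately obtain a where a: "a \<in> U" "\<nu> = a ^ K" unfolding phi_def by auto
  have "\<nu> * a = a ^ (K + 1)" using a by simp
  also have "K + 1 = q ^ d" using K_def qd by simp
  finally show ?thesis using a U_def by auto
qed


lemma det1: "det (A :: 'a :: comm_ring_1 mat) = A $$ (0,0)" if "A \<in> carrier_mat 1 1"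
  using that by (subst laplace_expansion_column[where j=0]) (auto simp: cofactor_def det_def)
lemma det2: "det (mat 2 2 f) = f (0,0) * f (1,1) - f (0,1) * (f (1,0) :: 'a :: comm_ring_1)"
  apply (subst laplace_expansion_column[where j=0])
  apply (auto simp: numeral_2_eq_2 lessThan_Suc cofactor_def det1 mat_delete_def)
  done

lemma pick2: assumes "(a::nat) < b" shows "pick {a,b} 0 = a" "pick {a,b} (Suc 0) = b"
proof -
  show 1: "pick {a,b} 0 = a" using assms by (auto intro!: Least_equality)
  show "pick {a,b} (Suc 0) = b" unfolding pick.simps(2) 1 using assms by (auto intro!: Least_equality)
qed

lemma card_lt_pos: assumes "(r1::nat) < r2" "r1 \<in> I" shows "card {a\<in>I. a < r1} < card {a\<in>I. a < r2}"
  by (rule psubset_card_mono) (use assms in auto)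

lemma card_lt_dim: assumes "(r::nat) < m" "r \<in> I" shows "card {a\<in>I. a < r} < card {i. i < m \<and> i \<in> I}"
  by (rule psubset_card_mono) (use assms in auto)

lemma rank1_minor_ord:
  fixes A :: "'a::field mat"
  assumes rk: "mat_rank (submatrix A I J) = 1" and "r1 \<in> I" "r2 \<in> I" "s1\<in>J" "s2\<in>J"
    "r2 < dim_row A" "s2 < dim_col A" "r1 < r2" "s1 < s2"
  shows "A$$(r1,s1) * A$$(r2,s2) = A$$(r1,s2) * A$$(r2,s1)"
proof (rule ccontr)
  assume ne: "\<not> ?thesis"
  define B where "B = submatrix A I J"
  define x1 where "x1 = card {a\<in>I. a < r1}"
  define x2 where "x2 = card {a\<in>I. a < r2}"
  define y1 where "y1 = card {a\<in>J. a < s1}"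
  define y2 where "y2 = card {a\<in>J. a < s2}"
  have x12: "x1 < x2" unfolding x1_def x2_def by (rule card_lt_pos) (use assms in auto)
  have y12: "y1 < y2" unfolding y1_def y2_def by (rule card_lt_pos) (use assms in auto)
  have x2d: "x2 < dim_row B" unfolding x2_def B_def dim_submatrix by (rule card_lt_dim) (use assms in auto)
  have y2d: "y2 < dim_col B" unfolding y2_def B_def dim_submatrix by (rule card_lt_dim) (use assms in auto)
  have Bx: "B $$ (x1,y1) = A $$ (r1,s1)" "B $$ (x1,y2) = A $$ (r1,s2)"
     "B $$ (x2,y1) = A $$ (r2,s1)" "B $$ (x2,y2) = A $$ (r2,s2)"
    unfolding B_def x1_def x2_def y1_def y2_def
    by (rule submatrix_index_card; use assms in auto)+
  have c1: "{i. i < dim_row B \<and> i \<in> {x1,x2}} = {x1,x2}" using x12 x2d by auto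
  have c2: "{i. i < dim_col B \<and> i \<in> {y1,y2}} = {y1,y2}" using y12 y2d by auto
  have C: "submatrix B {x1,x2} {y1,y2} = mat 2 2 (\<lambda>(i,j). B $$ (pick {x1,x2} i, pick {y1,y2} j))"
    unfolding submatrix_def c1 c2 using x12 y12 by (simp add: numeral_2_eq_2)
  have "det (submatrix B {x1,x2} {y1,y2}) \<noteq> 0"
    unfolding C det2 using ne by (simp del: pick.simps add: pick2[OF x12] pick2[OF y12] Bx)
  then have "card {j. j < dim_col B \<and> j \<in> {y1,y2}} \<le> vec_space.rank (dim_row B) B"
    by (intro vec_space.rank_gt_minor) auto
  then have "2 \<le> mat_rank B" unfolding c2 mat_rank_def using y12 by simp
  then show False using rk B_def by simp
qed

lemma rank1_minor:
  fixes A :: "'a::field mat"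
  assumes rk: "mat_rank (submatrix A I J) = 1" and "r1 \<in> I" "r2 \<in> I" "s1\<in>J" "s2\<in>J"
    "r1 < dim_row A" "r2 < dim_row A" "s1 < dim_col A" "s2 < dim_col A"
  shows "A$$(r1,s1) * A$$(r2,s2) = A$$(r1,s2) * A$$(r2,s1)"
proof -
  consider "r1 = r2" | "s1 = s2" | "r1 < r2" "s1 < s2" | "r1 < r2" "s2 < s1" | "r2 < r1" "s1 < s2" | "r2 < r1" "s2 < s1"
    by linarith
  then show ?thesis
  proof cases
    case 3 then show ?thesis using rank1_minor_ord[OF assms(1-5)] assms by auto
  next
    case 4 then show ?thesis using rank1_minor_ord[OF assms(1-3) assms(5,4)] assms by (auto simp: mult.commute)
  next
    case 5 then show ?thesis using rank1_minor_ord[OF assms(1) assms(3,2) assms(4,5)] assms by (auto simp: mult.commute)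
  next
    case 6 then show ?thesis using rank1_minor_ord[OF assms(1) assms(3,2) assms(5,4)] assms by (auto simp: mult.commute)
  qed auto
qed

lemma pick_in: assumes "i < card {a. a < m \<and> a \<in> S}" shows "pick S i \<in> S"
proof (cases "finite S")
  case True
  have "card {a. a < m \<and> a \<in> S} \<le> card S" by (rule card_mono[OF True]) auto
  then show ?thesis using assms by (intro pick_in_set) auto
qed (auto intro: pick_in_set)

lemma rank1_nonzero:
  fixes A :: "'a::field mat"
  assumes rk: "mat_rank (submatrix A I J) = 1"
  shows "\<exists>r s. r \<in> I \<and> s \<in> J \<and> r < dim_row A \<and> s < dim_col A \<and> A $$ (r,s) \<noteq> 0"
proof (rule ccontr)
  assume h: "\<not> ?thesis"
  define B where "B = submatrix A I J"
  have "B = 0\<^sub>m (dim_row B) (dim_col B)"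
  proof (rule eq_matI)
    fix i j assume ij: "i < dim_row (0\<^sub>m (dim_row B) (dim_col B))" "j < dim_col (0\<^sub>m (dim_row B) (dim_col B))"
    then have i: "i < card {i. i < dim_row A \<and> i \<in> I}" and j: "j < card {i. i < dim_col A \<and> i \<in> J}"
      by (auto simp: B_def dim_submatrix)
    have "B $$ (i,j) = A $$ (pick I i, pick J j)" unfolding B_def by (rule submatrix_index[OF i j])
    also have "\<dots> = 0" using h pick_le[OF i] pick_le[OF j] pick_in[OF i] pick_in[OF j] by blast
    finally show "B $$ (i,j) = 0\<^sub>m (dim_row B) (dim_col B) $$ (i,j)" using ij by simp
  qed auto
  then have "mat_rank B = 0" unfolding mat_rank_def by (metis vec_space.rank_0I)
  then show False using rk B_def by simp
qed

lemma frob_add: fixes x y :: "'a::comm_semiring_1" assumes "prime CHAR('a)" "q = CHAR('a)^k"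
  shows "(x+y)^(q^m) = x^(q^m)+y^(q^m)"
  using freshmans_dream'[OF assms(1), of "q^m" "k*m"] assms by (simp add: power_mult)

lemma frob_sum: fixes f :: "'b \<Rightarrow> 'a::comm_semiring_1" assumes "prime CHAR('a)" "q = CHAR('a)^k"
  shows "(sum f A)^(q^m) = (\<Sum>i\<in>A. f i ^ (q^m))"
  using freshmans_dream_sum'[OF assms(1), of "q^m" "k*m"] assms by (simp add: power_mult)

lemma sum_split_dN: "(\<Sum>j<d*N. (g::nat\<Rightarrow>'a::comm_monoid_add) j) = (\<Sum>i<d. \<Sum>k<(N::nat). g (i + d*k))"
proof (induction N)
  case (Suc N)
  have "(\<Sum>j<d*Suc N. g j) = (\<Sum>j<d*N. g j) + (\<Sum>i<d. g (i + d*N))"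
  proof -
    have "(\<Sum>j<d*Suc N. g j) = (\<Sum>j\<in>{0..<d*N+d}. g j)" by (simp add: atLeast0LessThan add.commute)
    also have "\<dots> = (\<Sum>j\<in>{0..<d*N}. g j) + (\<Sum>j\<in>{d*N..<d*N+d}. g j)"
      by (rule sum.atLeastLessThan_concat[symmetric]) auto
    finally have "(\<Sum>j<d*Suc N. g j) = (\<Sum>j<d*N. g j) + (\<Sum>j\<in>{d*N..<d*N+d}. g j)"
      by (simp add: atLeast0LessThan)
    also have "(\<Sum>j\<in>{d*N..<d*N+d}. g j) = (\<Sum>i<d. g (i + d*N))"
      by (rule sum.reindex_bij_witness[of _ "\<lambda>j. j + d*N" "\<lambda>j. j - d*N"]) auto
    finally show ?thesis .
  qed
  then show ?case using Suc by (simp add: sum.distrib)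
qed simp


theorem mainTheorem13:
  fixes q n d :: nat and c :: "nat \<Rightarrow> 'a::{finite, field}"
  assumes q_pp: "\<exists>p k. prime p \<and> k > 0 \<and> q = p ^ k"
    and n_pos: "n > 0"
    and card_field: "card (UNIV :: 'a set) = q ^ n"
    and d_gt: "d > 1" and d_dvd: "d dvd n"
    and red: "loewy_reducible n (dickson_matrix q n c) {i. i < n \<and> d dvd i} {i. i < n \<and> \<not> d dvd i}"
  shows "\<exists>lam a b f'. lam \<noteq> 0 \<and> a \<noteq> 0 \<and>
           (\<forall>i \<in> {1..d-1}. b i \<in> subfield_q q d) \<and> (\<exists>i \<in> {1..d-1}. b i \<noteq> 0) \<and>
           subfield_linear q d f' \<and>
           (\<forall>x. qpoly q n c x = f' x + lam * (\<Sum>i = 1..d-1. b i * (trace_rel q n d (a * x)) ^ (q ^ i)))"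
proof -
  obtain p k where pk: "prime p" "k > 0" "q = p^k" using q_pp by auto
  have CH: "CHAR('a) = p" using ff_char[OF pk(1), of "k*n"] card_field pk n_pos by (simp add: power_mult)
  have prC: "prime CHAR('a)" using CH pk by simp
  have qC: "q = CHAR('a)^k" using CH pk by simp
  have q2: "q \<ge> 2"
  proof -
    have "p \<ge> 2" using pk(1) prime_ge_2_nat by blast
    moreover have "p \<le> p^k" using pk(2) \<open>p \<ge> 2\<close> by (intro self_le_power) auto
    ultimately show ?thesis using pk(3) by simp
  qed
  define F where "F = (\<lambda>e (x::'a). x ^ (q^e))"
  have Fadd: "F e (x+y) = F e x + F e y" for e x y unfolding F_def using frob_add[OF prC qC] .
  have Fsum: "F e (sum f A) = (\<Sum>i\<in>A. F e (f i))" for e and f :: "nat \<Rightarrow> 'a" and A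
    unfolding F_def using frob_sum[OF prC qC] .
  have Fmul: "F e (x*y) = F e x * F e y" for e x y by (simp add: F_def power_mult_distrib)
  have Fdiv: "F e (x/y) = F e x / F e y" for e x y by (simp add: F_def power_divide)
  have Fcomp: "F e1 (F e2 x) = F (e1+e2) x" for e1 e2 x
    unfolding F_def by (simp add: power_mult[symmetric] power_add mult.commute)
  have F0: "F e 0 = 0" for e using q2 by (simp add: F_def)
  have F1: "F e 1 = 1" for e by (simp add: F_def)
  have Fz: "F 0 x = x" for x by (simp add: F_def)
  have Fn1: "F n x = x" for x unfolding F_def using ff_pow_card[of x] card_field by simp
  have Fn: "F (n*t) x = x" for t x
  proof (induction t)
    case (Suc t)
    have "F (n * Suc t) x = F n (F (n*t) x)" by (simp add: Fcomp)
    then show ?case using Suc Fn1 by simp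
  qed (simp add: Fz)
  have Finj: "x = y" if "F e x = F e y" for e x y
  proof -
    have "F (n*e - e) (F e x) = F (n*e - e) (F e y)" using that by simp
    moreover have "n*e - e + e = n*e" using n_pos by (simp add: le_add_diff_inverse2)
    ultimately show ?thesis using Fn by (simp add: Fcomp)
  qed
  have Fnz: "F e x \<noteq> 0 \<longleftrightarrow> x \<noteq> 0" for e x using q2 by (simp add: F_def)
  have Fmod: "F e x = F (e mod n) x" for e x
  proof -
    have "F e x = F (e mod n) (F (n * (e div n)) x)" by (simp add: Fcomp)
    then show ?thesis using Fn by simp
  qed
  define N where "N = n div d"
  have nd: "n = d * N" using d_dvd N_def by simp
  define \<alpha> where "\<alpha> = {i. i < n \<and> d dvd i}"
  define \<beta> where "\<beta> = {i. i < n \<and> \<not> d dvd i}"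
  define A where "A = dickson_matrix q n c"
  have cardal: "card \<alpha> \<ge> 2" and rk1: "mat_rank (submatrix A \<alpha> \<beta>) = 1"
    and rk2: "mat_rank (submatrix A \<beta> \<alpha>) = 1"
    using red unfolding loewy_reducible_def \<alpha>_def \<beta>_def A_def by auto
  have N2: "N \<ge> 2"
  proof (rule ccontr)
    assume "\<not> N \<ge> 2"
    moreover have "N \<noteq> 0" using nd n_pos by auto
    ultimately have "N = 1" by simp
    have "\<alpha> \<subseteq> {0}"
    proof
      fix i assume "i \<in> \<alpha>"
      then have "i < d" "d dvd i" using nd \<open>N = 1\<close> by (auto simp: \<alpha>_def)
      then have "i = 0" using dvd_imp_le[of d i] by (cases "i = 0") auto
      then show "i \<in> {0}" by simp
    qed
    then have "card \<alpha> \<le> 1" using card_mono[of "{0}" \<alpha>] by simp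
    then show False using cardal by simp
  qed
  have dn: "2 * d \<le> n" using nd N2 by simp
  define C where "C = (\<lambda>z::int. c (nat (z mod int n)))"
  have dimA: "dim_row A = n" "dim_col A = n" unfolding A_def dickson_matrix_def by auto
  have Aent: "A $$ (r,s) = F r (C (int s - int r))" if "r < n" "s < n" for r s
    using that unfolding A_def dickson_matrix_def C_def F_def by simp
  have Cper: "C (z + int n * t) = C z" for z t unfolding C_def by simp
  have Cnat: "C (int j) = c j" if "j < n" for j unfolding C_def using that by simp
  have M1: "A$$(r1,s1) * A$$(r2,s2) = A$$(r1,s2) * A$$(r2,s1)"
    if "r1 \<in> \<alpha>" "r2 \<in> \<alpha>" "s1 \<in> \<beta>" "s2 \<in> \<beta>" for r1 r2 s1 s2
    by (rule rank1_minor[OF rk1 that]) (use that in \<open>auto simp: dimA \<alpha>_def \<beta>_def\<close>)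
  have M2: "A$$(r1,s1) * A$$(r2,s2) = A$$(r1,s2) * A$$(r2,s1)"
    if "r1 \<in> \<beta>" "r2 \<in> \<beta>" "s1 \<in> \<alpha>" "s2 \<in> \<alpha>" for r1 r2 s1 s2
    by (rule rank1_minor[OF rk2 that]) (use that in \<open>auto simp: dimA \<alpha>_def \<beta>_def\<close>)
  obtain r s where rs: "r \<in> \<alpha>" "s \<in> \<beta>" "A $$ (r,s) \<noteq> 0"
    using rank1_nonzero[OF rk1] by auto
  define j0 where "j0 = nat ((int s - int r) mod int n)"
  have j0n: "j0 < n" unfolding j0_def using n_pos by (simp add: nat_less_iff)
  have Cj0: "C (int j0) \<noteq> 0"
  proof -
    have "C (int j0) = C (int s - int r)" unfolding j0_def C_def using n_pos by simp
    then show ?thesis using rs Aent[of r s] Fnz unfolding \<alpha>_def \<beta>_def by auto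
  qed
  have j0d: "\<not> d dvd j0"
  proof
    assume "d dvd j0"
    have ij0: "int j0 = (int s - int r) mod int n" unfolding j0_def using n_pos by simp
    have "int d dvd int j0" using \<open>d dvd j0\<close> by simp
    then have "int d dvd (int s - int r) mod int n" using ij0 by simp
    moreover have "int d dvd int n" using d_dvd by simp
    ultimately have "int d dvd (int s - int r)" by (metis dvd_mod_iff)
    moreover have "int d dvd int r" using rs unfolding \<alpha>_def by simp
    ultimately have "int d dvd int s" by (metis dvd_diff_commute dvd_add_right_iff diff_add_cancel)
    then show False using rs unfolding \<beta>_def by simp
  qed
  have j0pos: "0 < j0" using j0d by (cases j0) auto
  have al0: "0 \<in> \<alpha>" and ald: "d \<in> \<alpha>" unfolding \<alpha>_def using n_pos dn d_gt by auto
  have Ash: "A $$ (n - s', t) = F (n - s') (C (int s' + int t))" if "s' < n" "0 < s'" "t < n" for s' t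
  proof -
    have "A $$ (n - s', t) = F (n - s') (C (int t - int (n - s')))" using that by (intro Aent) auto
    also have "int t - int (n - s') = int s' + int t + int n * (-1)" using that by simp
    also have "C \<dots> = C (int s' + int t)" by (rule Cper)
    finally show ?thesis .
  qed
  have inb: "n - s' \<in> \<beta>" if "s' < n" "0 < s'" "\<not> d dvd s'" for s'
  proof -
    have "\<not> d dvd (n - s')"
    proof
      assume "d dvd (n - s')"
      then have "d dvd n - (n - s')" using d_dvd dvd_diff_nat by blast
      moreover have "n - (n - s') = s'" using that by simp
      ultimately show False using that by simp
    qed
    then show ?thesis using that unfolding \<beta>_def by auto
  qed
  define \<nu> where "\<nu> = F (n - j0) (C (int j0 + int d)) / F (n - j0) (C (int j0))"
  have rel0: "C (int s' + int d) = F s' \<nu> * C (int s')" if s'n: "s' < n" and s'd: "\<not> d dvd s'" for s'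
  proof -
    have s'pos: "0 < s'" using s'd by (cases s') auto
    have dn': "d < n" using dn d_gt by simp
    have "A$$(n - s',0) * A$$(n - j0,d) = A$$(n - s',d) * A$$(n - j0,0)"
      by (rule M2[OF inb[OF s'n s'pos s'd] inb[OF j0n j0pos j0d] al0 ald])
    then have eq: "F (n - s') (C (int s')) * F (n - j0) (C (int j0 + int d))
        = F (n - s') (C (int s' + int d)) * F (n - j0) (C (int j0))"
      using Ash[OF s'n s'pos, of 0] Ash[OF s'n s'pos dn'] Ash[OF j0n j0pos, of 0] Ash[OF j0n j0pos dn'] n_pos
      by simp
    define G where "G = F (s' + (n - j0))"
    have inv: "F s' (F (n - s') x) = x" for x using Fcomp[of s' "n - s'" x] Fn1 s'n by simp
    have FG: "F s' (F (n - j0) x) = G x" for x unfolding G_def by (rule Fcomp)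
    from arg_cong[OF eq, of "F s'"]
    have eq2: "C (int s') * G (C (int j0 + int d)) = C (int s' + int d) * G (C (int j0))"
      by (simp add: Fmul inv FG)
    have Gnz: "G (C (int j0)) \<noteq> 0" unfolding G_def using Fnz Cj0 by simp
    have "F s' \<nu> = G (C (int j0 + int d)) / G (C (int j0))"
      unfolding \<nu>_def by (simp add: Fdiv FG)
    then have h: "G (C (int j0 + int d)) = F s' \<nu> * G (C (int j0))" using Gnz by simp
    have "G (C (int j0)) * C (int s' + int d) = C (int s') * G (C (int j0 + int d))"
      using eq2 by (simp only: mult.commute)
    also have "\<dots> = G (C (int j0)) * (F s' \<nu> * C (int s'))"
      unfolding h by (simp only: mult_ac)
    finally have "G (C (int j0)) * C (int s' + int d) = G (C (int j0)) * (F s' \<nu> * C (int s'))" .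
    then show ?thesis using Gnz by (metis mult_left_cancel)
  qed
  have rel: "C (int s' + int d) = F s' \<nu> * C (int s')" if s'd: "\<not> d dvd s'" for s'
  proof -
    define s'' where "s'' = s' mod n"
    have sdec: "int s' = int s'' + int n * int (s' div n)" unfolding s''_def
      by (metis mod_mult_div_eq of_nat_add of_nat_mult add.commute)
    have "\<not> d dvd s''"
    proof
      assume "d dvd s''"
      then have "d dvd s'' + n * (s' div n)" using d_dvd by simp
      then show False using s'd unfolding s''_def by (metis mod_mult_div_eq add.commute)
    qed
    moreover have "s'' < n" unfolding s''_def using n_pos by simp
    ultimately have "C (int s'' + int d) = F s'' \<nu> * C (int s'')" using rel0 by blast
    moreover have "C (int s') = C (int s'')" using sdec Cper by simp
    moreover have "C (int s' + int d) = C (int s'' + int d)"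
      using sdec Cper[of "int s'' + int d" "int (s' div n)"] by (simp add: algebra_simps)
    moreover have "F s' \<nu> = F s'' \<nu>" unfolding s''_def by (rule Fmod)
    ultimately show ?thesis by simp
  qed
  define P where "P k = (\<Prod>l<k. F (d*l) \<nu>)" for k
  have ndk: "\<not> d dvd (i + d*k)" if "\<not> d dvd i" for i k
    using that by (metis dvd_add_times_triv_right_iff mult.commute)
  have iter: "C (int (i + d*k)) = F i (P k) * C (int i)" if id: "\<not> d dvd i" for i k
  proof (induction k)
    case 0 then show ?case by (simp add: P_def F1)
  next
    case (Suc k)
    have "C (int (i + d * Suc k)) = C (int (i + d*k) + int d)" by (simp add: algebra_simps)
    also have "\<dots> = F (i + d*k) \<nu> * C (int (i + d*k))" by (rule rel[OF ndk[OF id]])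
    also have "\<dots> = F (i + d*k) \<nu> * (F i (P k) * C (int i))" using Suc by simp
    also have "F i (P (Suc k)) = F i (P k) * F (i + d*k) \<nu>" by (simp add: P_def Fmul Fcomp)
    ultimately show ?case by (simp add: mult_ac)
  qed
  define i0 where "i0 = j0 mod d"
  have i0d: "i0 < d" unfolding i0_def using d_gt by simp
  have i0nd: "\<not> d dvd i0" unfolding i0_def using j0d by (simp add: dvd_eq_mod_eq_0)
  have j0dec: "j0 = i0 + d * (j0 div d)" unfolding i0_def by simp
  have Ci0: "C (int i0) \<noteq> 0" using iter[OF i0nd, of "j0 div d"] j0dec Cj0 by auto
  have "C (int (i0 + d*N)) = C (int i0)" using Cper[of "int i0" 1] nd by simp
  then have "F i0 (P N) * C (int i0) = 1 * C (int i0)" using iter[OF i0nd, of N] by simp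
  then have "F i0 (P N) = F i0 1" using Ci0 F1 by (metis mult_right_cancel)
  then have PN: "P N = 1" by (rule Finj)
  have norm: "\<nu> ^ (\<Sum>l<N. (q^d)^l) = 1"
  proof -
    have "\<nu> ^ (\<Sum>l<N. (q^d)^l) = (\<Prod>l<N. \<nu> ^ ((q^d)^l))" by (rule power_sum)
    also have "\<dots> = P N" unfolding P_def F_def by (simp add: power_mult)
    finally show ?thesis using PN by simp
  qed
  obtain a where a0: "a \<noteq> 0" and a1: "\<nu> * a = a ^ (q ^ d)"
    using hilbert90[OF card_field q2 nd _ _ norm] d_gt N2 by auto
  have Pa: "P k * a = F (d*k) a" for k
  proof (induction k)
    case 0 then show ?case by (simp add: P_def Fz)
  next
    case (Suc k)
    have "P (Suc k) * a = F (d*k) \<nu> * (P k * a)" by (simp add: P_def mult_ac)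
    also have "\<dots> = F (d*k) (\<nu> * a)" using Suc by (simp add: Fmul)
    also have "\<dots> = F (d*k) (F d a)" using a1 by (simp add: F_def)
    also have "\<dots> = F (d * Suc k) a" by (simp add: Fcomp algebra_simps)
    finally show ?case .
  qed
  define e where "e i = C (int i) / F i a" for i
  have Fa: "F i a \<noteq> 0" for i using Fnz a0 by simp
  have key: "C (int (i + d*k)) = F (i + d*k) a * e i" if id: "\<not> d dvd i" for i k
  proof -
    have "F i (P k) * F i a = F (i + d*k) a" using Pa[of k] by (metis Fmul Fcomp)
    then have "F i (P k) = F (i + d*k) a / F i a" using Fa by (simp add: field_simps)
    then show ?thesis using iter[OF id, of k] unfolding e_def by simp
  qed
  define lam where "lam = e i0"
  have lam0: "lam \<noteq> 0" unfolding lam_def e_def using Ci0 Fa by simp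
  have ltn: "i + d*k < n" if "i < d" "k < N" for i k
  proof -
    have "i + d*k < d + d*k" using that by simp
    also have "d + d*k = d * Suc k" by simp
    also have "\<dots> \<le> d * N" using that by (intro mult_le_mono2) simp
    finally show ?thesis using nd by simp
  qed
  have erel: "F d (e i) = e i * F d lam / lam" if "0 < i" "i < d" for i
  proof -
    have idd: "\<not> d dvd i" using that by (auto dest: dvd_imp_le)
    have i0pos: "0 < i0" using i0nd by (cases i0) auto
    have s1: "i + d \<in> \<beta>" using ltn[OF \<open>i < d\<close>, of 1] N2 idd unfolding \<beta>_def by (auto simp: dvd_add_left_iff)
    have s2: "i0 + d \<in> \<beta>" using ltn[OF i0d, of 1] N2 i0nd unfolding \<beta>_def by (auto simp: dvd_add_left_iff)
    have dn': "d < n" using dn d_gt by simp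
    have "A$$(0, i + d) * A$$(d, i0 + d) = A$$(0, i0 + d) * A$$(d, i + d)"
      by (rule M1[OF al0 ald s1 s2])
    then have eq: "C (int (i + d)) * F d (C (int i0)) = C (int (i0 + d)) * F d (C (int i))"
      using Aent s1 s2 dn' n_pos unfolding \<beta>_def by (simp add: Fz)
    have k1: "C (int (i + d)) = F (i + d) a * e i" "C (int (i0 + d)) = F (i0 + d) a * e i0"
      using key[OF idd, of 1] key[OF i0nd, of 1] by simp_all
    have k0: "F d (C (int i)) = F (i + d) a * F d (e i)" "F d (C (int i0)) = F (i0 + d) a * F d (e i0)"
      using key[OF idd, of 0] key[OF i0nd, of 0] by (simp_all add: Fmul Fcomp add.commute)
    have "(F (i + d) a * F (i0 + d) a) * (e i * F d lam) = (F (i + d) a * F (i0 + d) a) * (lam * F d (e i))"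
      using eq unfolding k1 k0 lam_def by (simp add: mult_ac)
    then have "e i * F d lam = lam * F d (e i)" using Fa by simp
    then show ?thesis using lam0 by (simp add: field_simps)
  qed
  define b where "b i = e i / lam" for i
  have bsub: "\<forall>i \<in> {1..d-1}. b i \<in> subfield_q q d"
  proof
    fix i assume "i \<in> {1..d-1}"
    then have "0 < i" "i < d" by auto
    have Flam: "F d lam \<noteq> 0" using Fnz lam0 by simp
    have "F d (b i) = b i" unfolding b_def using erel[OF \<open>0 < i\<close> \<open>i < d\<close>] Flam lam0
      by (simp add: Fdiv field_simps)
    then show "b i \<in> subfield_q q d" unfolding subfield_q_def F_def by simp
  qed
  have i0pos: "0 < i0" using i0nd by (cases i0) auto
  have bnz: "\<exists>i \<in> {1..d-1}. b i \<noteq> 0"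
    using i0pos i0d lam0 unfolding b_def lam_def by (intro bexI[of _ i0]) auto
  define f' where "f' x = (\<Sum>k<N. c (d*k) * F (d*k) x)" for x
  have lin: "subfield_linear q d f'"
    unfolding subfield_linear_def
  proof (intro conjI allI ballI)
    fix x y show "f' (x + y) = f' x + f' y" unfolding f'_def by (simp add: Fadd distrib_left sum.distrib)
  next
    fix cc x :: 'a assume "cc \<in> subfield_q q d"
    then have cc: "F d cc = cc" unfolding subfield_q_def F_def by simp
    have ccd: "F (d*k) cc = cc" for k
    proof (induction k)
      case 0 then show ?case by (simp add: Fz)
    next
      case (Suc k)
      have "F (d * Suc k) cc = F d (F (d*k) cc)" by (simp add: Fcomp)
      then show ?case using Suc cc by simp
    qed
    show "f' (cc * x) = cc * f' x" unfolding f'_def Fmul ccd sum_distrib_left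
      by (simp add: mult.left_commute)
  qed
  have ident: "qpoly q n c x = f' x + lam * (\<Sum>i = 1..d-1. b i * (trace_rel q n d (a * x)) ^ (q ^ i))" for x
  proof -
    have "qpoly q n c x = (\<Sum>j<d*N. c j * F j x)" unfolding qpoly_def F_def nd ..
    also have "\<dots> = (\<Sum>i<d. \<Sum>k<N. c (i + d*k) * F (i + d*k) x)" by (rule sum_split_dN)
    also have "{..<d} = insert 0 {1..d-1}" using d_gt by auto
    also have "(\<Sum>i\<in>insert 0 {1..d-1}. \<Sum>k<N. c (i + d*k) * F (i + d*k) x)
       = f' x + (\<Sum>i\<in>{1..d-1}. \<Sum>k<N. c (i + d*k) * F (i + d*k) x)"
      by (subst sum.insert) (auto simp: f'_def)
    also have "(\<Sum>i\<in>{1..d-1}. \<Sum>k<N. c (i + d*k) * F (i + d*k) x)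
       = (\<Sum>i\<in>{1..d-1}. lam * (b i * (trace_rel q n d (a * x)) ^ (q ^ i)))"
    proof (rule sum.cong[OF refl])
      fix i assume "i \<in> {1..d-1}"
      then have i: "0 < i" "i < d" by auto
      then have idd: "\<not> d dvd i" by (auto dest: dvd_imp_le)
      have tr: "trace_rel q n d (a * x) = (\<Sum>k<N. F (d*k) (a * x))"
        unfolding trace_rel_def F_def N_def ..
      have "(trace_rel q n d (a * x)) ^ (q ^ i) = F i (trace_rel q n d (a * x))" by (simp add: F_def)
      also have "\<dots> = (\<Sum>k<N. F (i + d*k) (a * x))" unfolding tr by (simp add: Fsum Fcomp)
      finally have "lam * (b i * (trace_rel q n d (a * x)) ^ (q ^ i)) = (\<Sum>k<N. e i * (F (i + d*k) a * F (i + d*k) x))"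
        unfolding b_def using lam0 by (simp add: sum_distrib_left Fmul)
      also have "\<dots> = (\<Sum>k<N. c (i + d*k) * F (i + d*k) x)"
      proof (rule sum.cong[OF refl])
        fix k assume "k \<in> {..<N}"
        then have "i + d*k < n" using ltn i by simp
        then have "c (i + d*k) = F (i + d*k) a * e i" using key[OF idd, of k] Cnat[of "i + d*k"] by (simp only:)
        then show "e i * (F (i + d*k) a * F (i + d*k) x) = c (i + d*k) * F (i + d*k) x" by (simp add: mult_ac)
      qed
      finally show "(\<Sum>k<N. c (i + d*k) * F (i + d*k) x) = lam * (b i * (trace_rel q n d (a * x)) ^ (q ^ i))" by simp
    qed
    finally show ?thesis by (simp add: sum_distrib_left)
  qed
  show ?thesis using lam0 a0 bsub bnz lin ident by blast
qed
end
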